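(* Let $\mathcal{F}$ be a set of functions satisfying premise (P) below, and let $F\in\mathcal{F}$ have even arity. Then either every closed $\{\neq_2\}\mid\{F\}$-network (with any positive number of $F$-side vertices) has value $0$, or every such network has nonzero value.
   Context: $\neq_2(x,y)=1$ if $x\ne y$ and $0$ otherwise. $\mathrm{Holant}_{\neq}(\mathcal{F})$ denotes $\#\{\neq_2\}\mid\mathcal{F}$: inputs are finite bipartite multigraphs where every vertex on one side has degree 2 and carries $\neq_2$, and every vertex $v$ on the other ("$F$-side") carries some $F_v\in\mathcal{F}$ of arity $\deg(v)$ with an ordering of incident edges; value $\sum_{\sigma:E\to\{0,1\}}\prod(\text{vertex functions})$. Gadgets: such networks with dangling edges at $F$-side vertices; realizable functions are functions of gadgets. Premise (P): every realizable binary function is $\lambda\cdot\neq_2$ ($\lambda\in\mathbb{C}$), and every realizable arity-4 function is $\lambda\,\neq_2(x_{\tau(1)},x_{\tau(2)})\neq_2(x_{\tau(3)},x_{\tau(4)})$ for some $\lambda\in\mathbb{C}$ and permutation $\tau$ of $\{1,2,3,4\}$. *)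

theory Defs
  imports Complex_Main "HOL-Library.FuncSet" "HOL-Combinatorics.Permutations"
begin

text \<open>A (complex-valued, Boolean-domain) signature is a pair (n, f) of an arity n and a
  function f on bit strings; only the values of f on lists of length n matter.\<close>
type_synonym signature = "nat \<times> (bool list \<Rightarrow> complex)"

definition neq2 :: "bool \<Rightarrow> bool \<Rightarrow> complex" where
  "neq2 x y = (if x \<noteq> y then 1 else 0)"

text \<open>A gadget / network in Holant_neq: F-side vertices 0..<m, vertex v carries signature
  lab v with ordered incident edge slots (v,0), ..., (v, arity-1).  Each edge is incident to
  exactly one F-side slot, so edge variables are indexed by slots.  W lists the degree-2
  vertices carrying neq2, each given by the two F-side slots its two edges attach to.
  ds lists the dangling edges (in order).\<close>
definition slots :: "nat \<Rightarrow> (nat \<Rightarrow> signature) \<Rightarrow> (nat \<times> nat) set" where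
  "slots m lab = {(v, i). v < m \<and> i < fst (lab v)}"

definition valid_gadget ::
  "signature set \<Rightarrow> nat \<Rightarrow> (nat \<Rightarrow> signature) \<Rightarrow> ((nat \<times> nat) \<times> (nat \<times> nat)) list
     \<Rightarrow> (nat \<times> nat) list \<Rightarrow> bool" where
  "valid_gadget \<F> m lab W ds \<longleftrightarrow>
     (\<forall>v<m. lab v \<in> \<F>) \<and>
     distinct (concat (map (\<lambda>w. [fst w, snd w]) W) @ ds) \<and>
     set (concat (map (\<lambda>w. [fst w, snd w]) W) @ ds) = slots m lab"

definition gadget_fn ::
  "nat \<Rightarrow> (nat \<Rightarrow> signature) \<Rightarrow> ((nat \<times> nat) \<times> (nat \<times> nat)) list
     \<Rightarrow> (nat \<times> nat) list \<Rightarrow> bool list \<Rightarrow> complex" where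
  "gadget_fn m lab W ds x =
     (\<Sum>\<sigma> \<in> {\<sigma> \<in> slots m lab \<rightarrow>\<^sub>E (UNIV :: bool set). \<forall>j < length ds. \<sigma> (ds ! j) = x ! j}.
        (\<Prod>v<m. snd (lab v) (map (\<lambda>i. \<sigma> (v, i)) [0..<fst (lab v)])) *
        prod_list (map (\<lambda>w. neq2 (\<sigma> (fst w)) (\<sigma> (snd w))) W))"

definition premise_P :: "signature set \<Rightarrow> bool" where
  "premise_P \<F> \<longleftrightarrow>
     (\<forall>m lab W ds. valid_gadget \<F> m lab W ds \<and> length ds = 2 \<longrightarrow>
        (\<exists>c::complex. \<forall>x y. gadget_fn m lab W ds [x, y] = c * neq2 x y)) \<and>
     (\<forall>m lab W ds. valid_gadget \<F> m lab W ds \<and> length ds = 4 \<longrightarrow>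
        (\<exists>(c::complex) \<tau>. \<tau> permutes {0..<4} \<and>
           (\<forall>xs. length xs = 4 \<longrightarrow>
              gadget_fn m lab W ds xs =
                c * neq2 (xs ! \<tau> 0) (xs ! \<tau> 1) * neq2 (xs ! \<tau> 2) (xs ! \<tau> 3))))"

definition network_value ::
  "nat \<Rightarrow> (nat \<Rightarrow> signature) \<Rightarrow> ((nat \<times> nat) \<times> (nat \<times> nat)) list \<Rightarrow> complex" where
  "network_value m lab W = gadget_fn m lab W [] []"

end

theory Submission imports Defs "HOL-Library.Product_Lexorder" "HOL-Library.Multiset" begin

definition pr :: "('a \<times> 'a) \<Rightarrow> 'a list" where "pr w = [fst w, snd w]"
definition nq :: "(nat\<times>nat \<Rightarrow> bool) \<Rightarrow> ((nat\<times>nat)\<times>(nat\<times>nat)) \<Rightarrow> complex" where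
  "nq \<sigma> w = neq2 (\<sigma> (fst w)) (\<sigma> (snd w))"
definition Aw :: "nat \<Rightarrow> (nat \<Rightarrow> signature) \<Rightarrow> (nat\<times>nat \<Rightarrow> bool) \<Rightarrow> complex" where
  "Aw m lab \<sigma> = (\<Prod>v<m. snd (lab v) (map (\<lambda>i. \<sigma> (v, i)) [0..<fst (lab v)]))"

lemma nv_eq: "network_value m lab W = (\<Sum>\<sigma>\<in>slots m lab \<rightarrow>\<^sub>E (UNIV::bool set). Aw m lab \<sigma> * prod_list (map (nq \<sigma>) W))"
  unfolding network_value_def gadget_fn_def Aw_def nq_def by simp

lemma gf_eq: "gadget_fn m lab W ds xs = (\<Sum>\<sigma>\<in>{\<sigma> \<in> slots m lab \<rightarrow>\<^sub>E (UNIV::bool set). \<forall>j<length ds. \<sigma> (ds!j) = xs!j}. Aw m lab \<sigma> * prod_list (map (nq \<sigma>) W))"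
  unfolding gadget_fn_def Aw_def nq_def by simp

lemma slots_Sigma: "slots m lab = Sigma {..<m} (\<lambda>v. {..<fst (lab v)})"
  unfolding slots_def by auto

lemma finite_slots[simp]: "finite (slots m lab)"
  unfolding slots_Sigma by auto

lemma split_sum:
  fixes G :: "(nat\<times>nat \<Rightarrow> bool) \<Rightarrow> complex"
  assumes "finite S" "\<And>\<sigma>. Q (map \<sigma> ds) = H \<sigma>"
  shows "(\<Sum>\<sigma>\<in>S \<rightarrow>\<^sub>E (UNIV::bool set). G \<sigma> * H \<sigma>) =
    (\<Sum>xs\<in>{xs. length xs = length ds}. Q xs * (\<Sum>\<sigma>\<in>{\<sigma>\<in>S \<rightarrow>\<^sub>E (UNIV::bool set). \<forall>j<length ds. \<sigma> (ds!j) = xs!j}. G \<sigma>))"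
proof -
  let ?P = "S \<rightarrow>\<^sub>E (UNIV::bool set)"
  let ?L = "{xs::bool list. length xs = length ds}"
  have fin: "finite ?P" using assms(1) by (simp add: finite_PiE)
  have finL: "finite ?L" using finite_lists_length_eq[of "UNIV::bool set" "length ds"] by simp
  have "(\<Sum>xs\<in>?L. Q xs * (\<Sum>\<sigma>\<in>{\<sigma>\<in>?P. \<forall>j<length ds. \<sigma> (ds!j) = xs!j}. G \<sigma>))
      = (\<Sum>xs\<in>?L. \<Sum>\<sigma>\<in>{\<sigma>\<in>?P. map \<sigma> ds = xs}. G \<sigma> * H \<sigma>)"
  proof (rule sum.cong[OF refl])
    fix xs assume "xs \<in> ?L"
    then have e: "{\<sigma>\<in>?P. \<forall>j<length ds. \<sigma> (ds!j) = xs!j} = {\<sigma>\<in>?P. map \<sigma> ds = xs}"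
      by (auto simp: list_eq_iff_nth_eq)
    show "Q xs * (\<Sum>\<sigma>\<in>{\<sigma>\<in>?P. \<forall>j<length ds. \<sigma> (ds!j) = xs!j}. G \<sigma>) = (\<Sum>\<sigma>\<in>{\<sigma>\<in>?P. map \<sigma> ds = xs}. G \<sigma> * H \<sigma>)"
      unfolding e sum_distrib_left
      by (rule sum.cong[OF refl]) (use assms(2) in auto)
  qed
  also have "\<dots> = (\<Sum>\<sigma>\<in>?P. G \<sigma> * H \<sigma>)"
    by (rule sum.group[OF fin finL]) auto
  finally show ?thesis by simp
qed

definition nrm :: "('a::linorder \<times> 'a) \<Rightarrow> ('a \<times> 'a)" where
  "nrm w = (min (fst w) (snd w), max (fst w) (snd w))"

lemma neq2_sym: "neq2 x y = neq2 y x" unfolding neq2_def by auto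

lemma nq_nrm[simp]: "nq \<sigma> (nrm w) = nq \<sigma> w"
  unfolding nq_def nrm_def by (cases "fst w \<le> snd w") (auto simp: neq2_sym min_def max_def)

lemma pr_fun: "(\<lambda>w. [fst w, snd w]) = pr" by (simp add: pr_def fun_eq_iff)

lemma mset_concat_pr: "mset (concat (map pr W)) = sum_mset (image_mset (\<lambda>w. {#fst w, snd w#}) (mset W))"
  by (induction W) (auto simp: pr_def)

lemma mset_concat_pr_nrm: "mset (concat (map pr (map nrm W))) = mset (concat (map pr W))"
  by (induction W) (auto simp: pr_def nrm_def min_def max_def)

lemma mset_concat_equiv:
  assumes "mset (map nrm W) = mset (map nrm W')"
  shows "mset (concat (map pr W)) = mset (concat (map pr W'))"
proof -
  have "mset (concat (map pr W)) = mset (concat (map pr (map nrm W)))" by (rule mset_concat_pr_nrm[symmetric])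
  also have "\<dots> = mset (concat (map pr (map nrm W')))" unfolding mset_concat_pr using assms by simp
  also have "\<dots> = mset (concat (map pr W'))" by (rule mset_concat_pr_nrm)
  finally show ?thesis .
qed

lemma prod_nq_equiv:
  assumes "mset (map nrm W) = mset (map nrm W')"
  shows "prod_list (map (nq \<sigma>) W) = prod_list (map (nq \<sigma>) W')"
proof -
  have "prod_list (map (nq \<sigma>) W) = prod_list (map (nq \<sigma>) (map nrm W))" by (simp add: comp_def)
  also have "\<dots> = prod_mset (image_mset (nq \<sigma>) (mset (map nrm W)))"
    by (metis mset_map prod_mset_prod_list)
  also have "\<dots> = prod_mset (image_mset (nq \<sigma>) (mset (map nrm W')))" using assms by simp
  also have "\<dots> = prod_list (map (nq \<sigma>) (map nrm W'))" by (metis mset_map prod_mset_prod_list)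
  also have "\<dots> = prod_list (map (nq \<sigma>) W')" by (simp add: comp_def)
  finally show ?thesis .
qed

lemma valid_mset:
  assumes "mset (concat (map pr W) @ ds) = mset (concat (map pr W') @ ds')"
  shows "valid_gadget \<F> m lab W ds = valid_gadget \<F> m lab W' ds'"
  unfolding valid_gadget_def pr_fun
  using mset_eq_imp_distinct_iff[OF assms] mset_eq_setD[OF assms] by simp

lemma nv_equiv:
  assumes "mset (map nrm W) = mset (map nrm W')"
  shows "network_value m lab W = network_value m lab W'"
  unfolding nv_eq using prod_nq_equiv[OF assms] by simp

lemma valid_equiv:
  assumes "mset (map nrm W) = mset (map nrm W')"
  shows "valid_gadget \<F> m lab W ds = valid_gadget \<F> m lab W' ds"
  by (rule valid_mset) (simp add: mset_concat_equiv[OF assms])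

lemma lt4: "(a::nat) < 4 \<Longrightarrow> a = 0 \<or> a = 1 \<or> a = 2 \<or> a = 3" by auto

lemma wit:
  fixes a b c d p q r s :: nat
  assumes "a<4" "b<4" "c<4" "d<4" "distinct [a,b,c,d]" "(p,q,r,s) \<in> {(0,1,2,3),(0,2,1,3)}"
  shows "\<exists>xs\<in>{[True,False,True,False],[True,False,False,True],[True,True,False,False]}.
     xs!p \<noteq> xs!q \<and> xs!r \<noteq> xs!s \<and> xs!a \<noteq> xs!b \<and> xs!c \<noteq> xs!d"
proof -
  have "p = 0 \<and> q = 1 \<and> r = 2 \<and> s = 3 \<or> p = 0 \<and> q = 2 \<and> r = 1 \<and> s = 3" using assms(6) by simp
  then show ?thesis using lt4[OF assms(1)] lt4[OF assms(2)] lt4[OF assms(3)] lt4[OF assms(4)] assms(5)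
    by (elim disjE conjE) simp_all
qed

lemma neq2_bool: "neq2 x y = of_bool (x \<noteq> y)" unfolding neq2_def by simp

lemma finL: "finite {xs::bool list. length xs = n}"
  using finite_lists_length_eq[of "UNIV::bool set" n] by simp

lemma Ksum_nz:
  assumes "\<tau> permutes {0..<4}" "(p,q,r,s) \<in> {(0,1,2,3),(0,2,1,3)}"
  shows "(\<Sum>xs\<in>{xs::bool list. length xs = 4}. neq2 (xs!p) (xs!q) * neq2 (xs!r) (xs!s) *
     (neq2 (xs ! \<tau> 0) (xs ! \<tau> 1) * neq2 (xs ! \<tau> 2) (xs ! \<tau> 3))) \<noteq> 0"
proof -
  have im: "\<tau> i < 4" if "i < 4" for i using permutes_in_image[OF assms(1)] that by auto
  have "inj \<tau>" using permutes_inj[OF assms(1)] .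
  then have dist: "distinct [\<tau> 0, \<tau> 1, \<tau> 2, \<tau> 3]" by (simp add: inj_eq)
  have i4: "\<tau> 0 < 4" "\<tau> 1 < 4" "\<tau> 2 < 4" "\<tau> 3 < 4" by (simp_all add: im)
  from wit[OF i4 dist assms(2)]
  obtain xs where xs1: "xs\<in>{[True,False,True,False],[True,False,False,True],[True,True,False,False]}"
     and xs2: "xs!p \<noteq> xs!q \<and> xs!r \<noteq> xs!s \<and> xs!(\<tau> 0) \<noteq> xs!(\<tau> 1) \<and> xs!(\<tau> 2) \<noteq> xs!(\<tau> 3)" 
    by (rule bexE)
  let ?A = "{xs::bool list. length xs = 4}"
  let ?P = "\<lambda>xs::bool list. xs!p \<noteq> xs!q \<and> xs!r \<noteq> xs!s \<and> xs!(\<tau> 0) \<noteq> xs!(\<tau> 1) \<and> xs!(\<tau> 2) \<noteq> xs!(\<tau> 3)"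
  have "(\<Sum>xs\<in>?A. neq2 (xs!p) (xs!q) * neq2 (xs!r) (xs!s) *
     (neq2 (xs ! \<tau> 0) (xs ! \<tau> 1) * neq2 (xs ! \<tau> 2) (xs ! \<tau> 3))) = (\<Sum>xs\<in>?A. of_bool (?P xs))"
    by (rule sum.cong[OF refl]) (simp only: neq2_bool of_bool_conj mult.assoc)
  also have "\<dots> = of_nat (card (?A \<inter> {xs. ?P xs}))" by (rule sum_of_bool_eq[OF finL finL])
  also have "\<dots> \<noteq> 0"
  proof -
    have len: "length xs = 4" using xs1 by auto
    have mem: "xs \<in> ?A \<inter> {xs. ?P xs}" by (intro IntI CollectI) (rule len, rule xs2)
    have fin: "finite (?A \<inter> {xs. ?P xs})" using finL[of 4] by (rule finite_Int[OF disjI1])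
    have "card (?A \<inter> {xs. ?P xs}) \<noteq> 0" using card_0_eq[OF fin] mem by blast
    then show ?thesis by (simp only: of_nat_eq_0_iff not_False_eq_True)
  qed
  finally show ?thesis .
qed
lemma switch:
  assumes P: "premise_P \<F>" and FF: "F \<in> \<F>"
    and V: "valid_gadget {F} m (\<lambda>_. F) ((a,b)#(c,d)#rest) []"
  shows "valid_gadget {F} m (\<lambda>_. F) ((a,c)#(b,d)#rest) []"
    and "network_value m (\<lambda>_. F) ((a,b)#(c,d)#rest) = 0 \<longleftrightarrow> network_value m (\<lambda>_. F) ((a,c)#(b,d)#rest) = 0"
proof -
  let ?lab = "\<lambda>_::nat. F"
  have me: "mset (concat (map pr ((a,c)#(b,d)#rest)) @ []) = mset (concat (map pr ((a,b)#(c,d)#rest)) @ [])"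
    by (simp add: pr_def add_mset_commute)
  show "valid_gadget {F} m ?lab ((a,c)#(b,d)#rest) []"
    using V valid_mset[OF me] by blast
  have VG: "valid_gadget \<F> m ?lab rest [a,b,c,d]"
  proof -
    have "valid_gadget \<F> m ?lab ((a,b)#(c,d)#rest) []" using V FF unfolding valid_gadget_def by simp
    moreover have "mset (concat (map pr ((a,b)#(c,d)#rest)) @ []) = mset (concat (map pr rest) @ [a,b,c,d])"
      by (simp add: pr_def)
    ultimately show ?thesis using valid_mset by blast
  qed
  have P4: "\<forall>m lab W ds. valid_gadget \<F> m lab W ds \<and> length ds = 4 \<longrightarrow>
        (\<exists>(c::complex) \<tau>. \<tau> permutes {0..<4} \<and>
           (\<forall>xs. length xs = 4 \<longrightarrow>
              gadget_fn m lab W ds xs =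
                c * neq2 (xs ! \<tau> 0) (xs ! \<tau> 1) * neq2 (xs ! \<tau> 2) (xs ! \<tau> 3)))"
    using P unfolding premise_P_def by (rule conjunct2)
  have ex: "\<exists>(cc::complex) \<tau>. \<tau> permutes {0..<4} \<and>
           (\<forall>xs. length xs = 4 \<longrightarrow>
              gadget_fn m ?lab rest [a,b,c,d] xs =
                cc * neq2 (xs ! \<tau> 0) (xs ! \<tau> 1) * neq2 (xs ! \<tau> 2) (xs ! \<tau> 3))"
    using P4 VG by simp
  then obtain c0 \<tau> where tau: "\<tau> permutes {0..<4}" and g0: "\<forall>xs. length xs = 4 \<longrightarrow>
      gadget_fn m ?lab rest [a,b,c,d] xs = c0 * neq2 (xs ! \<tau> 0) (xs ! \<tau> 1) * neq2 (xs ! \<tau> 2) (xs ! \<tau> 3)"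
    by blast
  have g: "gadget_fn m ?lab rest [a,b,c,d] xs = c0 * neq2 (xs ! \<tau> 0) (xs ! \<tau> 1) * neq2 (xs ! \<tau> 2) (xs ! \<tau> 3)"
    if "length xs = 4" for xs using g0 that by blast
  let ?G = "\<lambda>\<sigma>. Aw m ?lab \<sigma> * prod_list (map (nq \<sigma>) rest)"
  let ?S = "slots m ?lab"
  have gg: "(\<Sum>\<sigma>\<in>{\<sigma>\<in>?S \<rightarrow>\<^sub>E (UNIV::bool set). \<forall>j<length [a,b,c,d]. \<sigma> ([a,b,c,d]!j) = xs!j}. ?G \<sigma>)
      = gadget_fn m ?lab rest [a,b,c,d] xs" for xs
    by (simp add: gf_eq)
  have gen: "network_value m ?lab ((x1,x2)#(x3,x4)#rest) = c0 * (\<Sum>xs\<in>{xs::bool list. length xs = 4}. Q xs *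
     (neq2 (xs ! \<tau> 0) (xs ! \<tau> 1) * neq2 (xs ! \<tau> 2) (xs ! \<tau> 3)))"
    if hQ: "\<And>\<sigma>. Q (map \<sigma> [a,b,c,d]) = nq \<sigma> (x1,x2) * nq \<sigma> (x3,x4)" for Q x1 x2 x3 x4
  proof -
    have "network_value m ?lab ((x1,x2)#(x3,x4)#rest) = (\<Sum>\<sigma>\<in>?S \<rightarrow>\<^sub>E (UNIV::bool set). ?G \<sigma> * (nq \<sigma> (x1,x2) * nq \<sigma> (x3,x4)))"
      unfolding nv_eq by (rule sum.cong[OF refl]) (simp only: list.map prod_list.Cons ac_simps)
    also have "\<dots> = (\<Sum>xs\<in>{xs. length xs = length [a,b,c,d]}. Q xs *
        (\<Sum>\<sigma>\<in>{\<sigma>\<in>?S \<rightarrow>\<^sub>E (UNIV::bool set). \<forall>j<length [a,b,c,d]. \<sigma> ([a,b,c,d]!j) = xs!j}. ?G \<sigma>))"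
      by (rule split_sum[where Q=Q and ds="[a,b,c,d]" and H="\<lambda>\<sigma>. nq \<sigma> (x1,x2) * nq \<sigma> (x3,x4)" and G="?G"])
         (simp, rule hQ)
    also have "\<dots> = (\<Sum>xs\<in>{xs::bool list. length xs = 4}. Q xs * (c0 *
        (neq2 (xs ! \<tau> 0) (xs ! \<tau> 1) * neq2 (xs ! \<tau> 2) (xs ! \<tau> 3))))"
      unfolding gg by (rule sum.cong) (simp add: eval_nat_numeral, simp add: g mult.assoc)
    also have "\<dots> = c0 * (\<Sum>xs\<in>{xs::bool list. length xs = 4}. Q xs *
     (neq2 (xs ! \<tau> 0) (xs ! \<tau> 1) * neq2 (xs ! \<tau> 2) (xs ! \<tau> 3)))"
      by (simp only: sum_distrib_left) (rule sum.cong[OF refl], simp only: ac_simps)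
    finally show ?thesis .
  qed
  have v1: "network_value m ?lab ((a,b)#(c,d)#rest) = c0 * (\<Sum>xs\<in>{xs::bool list. length xs = 4}.
     neq2 (xs!0) (xs!1) * neq2 (xs!2) (xs!3) *
     (neq2 (xs ! \<tau> 0) (xs ! \<tau> 1) * neq2 (xs ! \<tau> 2) (xs ! \<tau> 3)))"
    by (rule gen) (simp add: nq_def)
  have v2: "network_value m ?lab ((a,c)#(b,d)#rest) = c0 * (\<Sum>xs\<in>{xs::bool list. length xs = 4}.
     neq2 (xs!0) (xs!2) * neq2 (xs!1) (xs!3) *
     (neq2 (xs ! \<tau> 0) (xs ! \<tau> 1) * neq2 (xs ! \<tau> 2) (xs ! \<tau> 3)))"
    by (rule gen) (simp add: nq_def)
  have K1: "(\<Sum>xs\<in>{xs::bool list. length xs = 4}.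
     neq2 (xs!0) (xs!1) * neq2 (xs!2) (xs!3) *
     (neq2 (xs ! \<tau> 0) (xs ! \<tau> 1) * neq2 (xs ! \<tau> 2) (xs ! \<tau> 3))) \<noteq> 0"
    by (rule Ksum_nz[OF tau]) simp
  have K2: "(\<Sum>xs\<in>{xs::bool list. length xs = 4}.
     neq2 (xs!0) (xs!2) * neq2 (xs!1) (xs!3) *
     (neq2 (xs ! \<tau> 0) (xs ! \<tau> 1) * neq2 (xs ! \<tau> 2) (xs ! \<tau> 3))) \<noteq> 0"
    by (rule Ksum_nz[OF tau]) simp
  show "network_value m ?lab ((a,b)#(c,d)#rest) = 0 \<longleftrightarrow> network_value m ?lab ((a,c)#(b,d)#rest) = 0"
    by (simp only: v1 v2 mult_eq_0_iff K1 K2 simp_thms)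
qed

definition Lp :: "nat \<Rightarrow> nat \<Rightarrow> ((nat\<times>nat)\<times>(nat\<times>nat)) list" where
  "Lp k v = map (\<lambda>i. ((v,2*i),(v,2*i+1))) [0..<k]"
definition Cn :: "nat \<Rightarrow> nat \<Rightarrow> ((nat\<times>nat)\<times>(nat\<times>nat)) list" where
  "Cn k m = concat (map (Lp k) [0..<m])"

lemma set_Cn: "set (Cn k m) = (\<lambda>(v,i). ((v,2*i),(v,2*i+1))) ` ({..<m} \<times> {..<k})"
  by (auto simp: Cn_def Lp_def image_iff)

lemma length_Cn: "length (Cn k m) = m*k"
  by (induction m) (simp_all add: Cn_def Lp_def)

lemma distinct_Cn: "distinct (Cn k m)"
proof (rule card_distinct)
  have "inj_on (\<lambda>(v,i). ((v::nat,2*i),(v,2*i+1::nat))) ({..<m} \<times> {..<k})"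
    by (auto simp: inj_on_def)
  then have "card (set (Cn k m)) = card ({..<m} \<times> {..<k})"
    unfolding set_Cn by (rule card_image)
  then show "card (set (Cn k m)) = length (Cn k m)" by (simp add: length_Cn card_cartesian_product)
qed

lemma nrm_Cn: "map nrm (Cn k m) = Cn k m"
  by (rule map_idI) (auto simp: set_Cn nrm_def min_def max_def less_eq_prod_def)

lemma set_pr_nrm: "set (pr (nrm w)) = set (pr w)"
  by (auto simp: pr_def nrm_def min_def max_def)

lemma distinct_nrm: "distinct (concat (map pr W)) \<Longrightarrow> distinct (map nrm W)"
proof (induction W)
  case Nil
  then show ?case by simp
next
  case (Cons w W)
  have d: "distinct (pr w @ concat (map pr W))" using Cons.prems by simp
  have "nrm w \<notin> nrm ` set W"
  proof
    assume "nrm w \<in> nrm ` set W"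
    then obtain w' where w': "w' \<in> set W" "nrm w = nrm w'" by auto
    have "fst w \<in> set (pr w)" by (simp add: pr_def)
    also have "set (pr w) = set (pr w')" by (metis set_pr_nrm w'(2))
    also have "\<dots> \<subseteq> set (concat (map pr W))" using w'(1) by auto
    finally have "fst w \<in> set (concat (map pr W))" .
    then show False using d by (auto simp: pr_def)
  qed
  then show ?case using Cons by (simp add: distinct_append)
qed

lemma length_concat_pr: "length (concat (map pr W)) = 2 * length W"
  by (induction W) (auto simp: pr_def)

lemma card_slots: "card (slots m (\<lambda>_. F)) = m * fst F"
  unfolding slots_Sigma by (simp add: card_cartesian_product)


lemma nrm_in_Cn: "nrm (x,y) \<in> set (Cn k m) \<Longrightarrow> (x,y) \<in> set (Cn k m) \<or> (y,x) \<in> set (Cn k m)"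
  by (cases "x \<le> y") (auto simp: nrm_def min_def max_def)

lemma sub_lemma: "SW = {a,b} \<union> R \<Longrightarrow> SW' = insert c (insert d R) \<Longrightarrow> a \<notin> C \<Longrightarrow> b \<notin> C
   \<Longrightarrow> C - SW' \<subseteq> (C - SW) - {c}"
  by blast

lemma to_canon:
  assumes P: "premise_P \<F>" and FF: "F \<in> \<F>" and ev: "fst F = 2*k"
  shows "valid_gadget {F} m (\<lambda>_. F) W [] \<Longrightarrow>
    (network_value m (\<lambda>_. F) W = 0 \<longleftrightarrow> network_value m (\<lambda>_. F) (Cn k m) = 0)"
proof (induction "card (set (Cn k m) - set (map nrm W))" arbitrary: W rule: less_induct)
  case less
  let ?lab = "\<lambda>_::nat. F"
  have dW: "distinct (concat (map pr W))" and sW: "set (concat (map pr W)) = slots m ?lab"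
    using less.prems unfolding valid_gadget_def pr_fun by auto
  show ?case
  proof (cases "set (Cn k m) \<subseteq> set (map nrm W)")
    case True
    have dn: "distinct (map nrm W)" using distinct_nrm[OF dW] .
    have lenW: "length W = m*k"
    proof -
      have "length (concat (map pr W)) = m * fst F"
        using distinct_card[OF dW] sW card_slots[of m F] by simp
      then show ?thesis using ev length_concat_pr[of W] by simp
    qed
    have "set (Cn k m) = set (map nrm W)"
    proof (rule card_subset_eq)
      show "finite (set (map nrm W))" by simp
      show "set (Cn k m) \<subseteq> set (map nrm W)" by (rule True)
      show "card (set (Cn k m)) = card (set (map nrm W))"
        using distinct_card[OF dn] distinct_card[OF distinct_Cn[of k m]] length_Cn[of k m] lenW by simp
    qed
    then have "mset (map nrm W) = mset (map nrm (Cn k m))"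
      using set_eq_iff_mset_eq_distinct[OF dn distinct_Cn[of k m]] nrm_Cn by simp
    then show ?thesis using nv_equiv by metis
  next
    case False
    then obtain v i where vi: "v < m" "i < k" "((v,2*i),(v,2*i+1)) \<notin> set (map nrm W)"
      using set_Cn[of k m] by auto
    define p where "p = (v,2*i)"
    define q where "q = (v,2*i+1)"
    have pq: "(p,q) \<in> set (Cn k m)" using vi(1,2) unfolding set_Cn p_def q_def by auto
    have pqW: "(p,q) \<notin> set (map nrm W)" using vi(3) p_def q_def by simp
    have "p \<in> slots m ?lab" using vi ev by (simp add: p_def slots_def)
    then have "p \<in> set (concat (map pr W))" using sW by simp
    then obtain w1 where w1: "w1 \<in> set W" "p \<in> set (pr w1)" by auto
    then obtain W1 W2 where W: "W = W1 @ w1 # W2" by (meson split_list)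
    define p' where "p' = (if fst w1 = p then snd w1 else fst w1)"
    have nw1: "nrm w1 = nrm (p,p')" using w1(2)
      by (cases w1) (auto simp: p'_def pr_def nrm_def min_def max_def)
    have spw1: "set (pr w1) = {p, p'}" using w1(2) by (cases w1) (auto simp: p'_def pr_def)
    have d1: "distinct (concat (map pr W1) @ pr w1 @ concat (map pr W2))" using dW W by simp
    have disj: "set (pr w1) \<inter> set (concat (map pr (W1 @ W2))) = {}"
      using d1 by (auto simp del: set_concat)
    have "q \<in> slots m ?lab" using vi ev by (simp add: q_def slots_def)
    then have qS: "q \<in> set (concat (map pr W))" using sW by simp
    have pltq: "p < q" by (simp add: p_def q_def less_prod_def)
    have nrmpq: "nrm (p,q) = (p,q)" using less_imp_le[OF pltq] by (simp add: nrm_def min_def max_def)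
    have qp': "q \<noteq> p'"
    proof
      assume "q = p'"
      then have "nrm w1 = (p,q)" using nw1 nrmpq by simp
      moreover have "nrm w1 \<in> set (map nrm W)" using w1(1) by simp
      ultimately show False using pqW by simp
    qed
    have "q \<noteq> p" using pltq by simp
    then have "q \<notin> set (pr w1)" using qp' spw1 by simp
    then have "q \<in> set (concat (map pr (W1 @ W2)))" using qS W by auto
    then obtain w2 where w2: "w2 \<in> set (W1 @ W2)" "q \<in> set (pr w2)" by (auto simp del: map_append)
    then obtain V1 V2 where V: "W1 @ W2 = V1 @ w2 # V2" by (meson split_list)
    define q' where "q' = (if fst w2 = q then snd w2 else fst w2)"
    have nw2: "nrm w2 = nrm (q,q')" using w2(2)
      by (cases w2) (auto simp: q'_def pr_def nrm_def min_def max_def)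
    have spw2: "set (pr w2) = {q, q'}" using w2(2) by (cases w2) (auto simp: q'_def pr_def)
    have "set (pr w2) \<subseteq> set (concat (map pr (W1 @ W2)))" using w2(1) by (auto simp del: map_append)
    then have q'p: "q' \<noteq> p" using disj spw1 spw2 by blast
    let ?rest = "V1 @ V2"
    have mW: "mset W = mset (w1 # w2 # ?rest)"
    proof -
      have "mset W = add_mset w1 (mset (W1 @ W2))" using W by simp
      also have "mset (W1 @ W2) = mset (V1 @ w2 # V2)" by (simp only: V)
      also have "\<dots> = add_mset w2 (mset ?rest)" by simp
      finally show ?thesis by simp
    qed
    have m1: "mset (map nrm W) = mset (map nrm ((p,p')#(q,q')#?rest))"
      using mW nw1 nw2 by simp
    have V': "valid_gadget {F} m ?lab ((p,p')#(q,q')#?rest) []"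
      using less.prems valid_equiv[OF m1] by blast
    note sw = switch[OF P FF V']
    have e1: "network_value m ?lab W = network_value m ?lab ((p,p')#(q,q')#?rest)"
      by (rule nv_equiv[OF m1])
    let ?W' = "(p,q)#(p',q')#?rest"
    have n1: "nrm (p,p') \<notin> set (Cn k m)"
    proof
      assume "nrm (p,p') \<in> set (Cn k m)"
      then have "(p,p') \<in> set (Cn k m) \<or> (p',p) \<in> set (Cn k m)" by (rule nrm_in_Cn)
      then show False
      proof
        assume "(p,p') \<in> set (Cn k m)"
        then obtain u j where "p = (u,2*j)" "p' = (u,2*j+1)" unfolding set_Cn by auto
        then have "p' = q" by (simp add: p_def q_def)
        then show False using qp' by simp
      next
        assume "(p',p) \<in> set (Cn k m)"
        then obtain u j where "p = (u,2*j+1)" unfolding set_Cn by auto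
        then have "2*i = 2*j+1" by (simp add: p_def)
        then show False by presburger
      qed
    qed
    have n2: "nrm (q,q') \<notin> set (Cn k m)"
    proof
      assume "nrm (q,q') \<in> set (Cn k m)"
      then have "(q,q') \<in> set (Cn k m) \<or> (q',q) \<in> set (Cn k m)" by (rule nrm_in_Cn)
      then show False
      proof
        assume "(q,q') \<in> set (Cn k m)"
        then obtain u j where "q = (u,2*j)" unfolding set_Cn by auto
        then have "2*i+1 = 2*j" by (simp add: q_def)
        then show False by presburger
      next
        assume "(q',q) \<in> set (Cn k m)"
        then obtain u j where "q' = (u,2*j)" "q = (u,2*j+1)" unfolding set_Cn by auto
        then have "q' = p" by (simp add: p_def q_def)
        then show False using q'p by simp
      qed
    qed
    have sWn: "set (map nrm W) = {nrm (p,p'), nrm (q,q')} \<union> set (map nrm ?rest)"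
      using mset_eq_setD[OF m1] by simp
    have sW': "set (map nrm ?W') = insert (p,q) (insert (nrm (p',q')) (set (map nrm ?rest)))"
      by (simp only: list.map list.set(2) nrmpq)
    have sub: "set (Cn k m) - set (map nrm ?W') \<subseteq> (set (Cn k m) - set (map nrm W)) - {(p,q)}"
      by (rule sub_lemma[OF sWn sW' n1 n2])
    have lt: "card (set (Cn k m) - set (map nrm ?W')) < card (set (Cn k m) - set (map nrm W))"
    proof -
      have "card (set (Cn k m) - set (map nrm ?W')) \<le> card ((set (Cn k m) - set (map nrm W)) - {(p,q)})"
        by (rule card_mono[OF _ sub]) simp
      also have "\<dots> < card (set (Cn k m) - set (map nrm W))"
        by (rule card_Diff1_less) (use pq pqW in auto)
      finally show ?thesis .
    qed
    have "network_value m ?lab ?W' = 0 \<longleftrightarrow> network_value m ?lab (Cn k m) = 0"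
      by (rule less.hyps[OF lt sw(1)])
    then show ?thesis using e1 sw(2) by simp
  qed
qed

lemma sum_PiE_Un:
  fixes f g :: "('a \<Rightarrow> bool) \<Rightarrow> complex"
  assumes disj: "A \<inter> B = {}"
  shows "(\<Sum>\<sigma>\<in>(A \<union> B) \<rightarrow>\<^sub>E (UNIV::bool set). f (restrict \<sigma> A) * g (restrict \<sigma> B))
    = (\<Sum>\<sigma>\<in>A \<rightarrow>\<^sub>E (UNIV::bool set). f \<sigma>) * (\<Sum>\<sigma>\<in>B \<rightarrow>\<^sub>E (UNIV::bool set). g \<sigma>)"
proof -
  have "(\<Sum>\<sigma>\<in>A \<rightarrow>\<^sub>E (UNIV::bool set). f \<sigma>) * (\<Sum>\<sigma>\<in>B \<rightarrow>\<^sub>E (UNIV::bool set). g \<sigma>)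
      = (\<Sum>z\<in>(A \<rightarrow>\<^sub>E (UNIV::bool set)) \<times> (B \<rightarrow>\<^sub>E (UNIV::bool set)). f (fst z) * g (snd z))"
    by (simp add: sum_product sum.cartesian_product case_prod_beta)
  also have "\<dots> = (\<Sum>\<sigma>\<in>(A \<union> B) \<rightarrow>\<^sub>E (UNIV::bool set). f (restrict \<sigma> A) * g (restrict \<sigma> B))"
    apply (rule sum.reindex_bij_witness[where i = "\<lambda>\<sigma>. (restrict \<sigma> A, restrict \<sigma> B)"
          and j = "\<lambda>z x. if x \<in> A then fst z x else snd z x"])
    subgoal for z
      using disj by (cases z) (auto simp: fun_eq_iff PiE_def extensional_def)
    subgoal for z
      by (cases z) (auto simp: PiE_def extensional_def)
    subgoal for \<sigma>
      by (auto simp: fun_eq_iff PiE_def extensional_def)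
    subgoal for \<sigma>
      by auto
    subgoal for z
    proof -
      assume z: "z \<in> (A \<rightarrow>\<^sub>E (UNIV::bool set)) \<times> (B \<rightarrow>\<^sub>E (UNIV::bool set))"
      have r1: "restrict (\<lambda>x. if x \<in> A then fst z x else snd z x) A = fst z"
        using z by (cases z) (auto simp: fun_eq_iff PiE_def extensional_def)
      have r2: "restrict (\<lambda>x. if x \<in> A then fst z x else snd z x) B = snd z"
        using z disj by (cases z) (auto simp: fun_eq_iff PiE_def extensional_def)
      show ?thesis by (simp only: r1 r2)
    qed
    done
  finally show ?thesis by simp
qed

definition Bv :: "signature \<Rightarrow> nat \<Rightarrow> complex" where
  "Bv F k = (\<Sum>xs\<in>{xs::bool list. length xs = fst F}.
     snd F xs * prod_list (map (\<lambda>i. neq2 (xs!(2*i)) (xs!(2*i+1))) [0..<k]))"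

lemma vertex_sum:
  assumes ev: "fst F = 2*k"
  shows "(\<Sum>\<sigma>\<in>({v} \<times> {..<fst F}) \<rightarrow>\<^sub>E (UNIV::bool set).
      snd F (map (\<lambda>i. \<sigma> (v,i)) [0..<fst F]) * prod_list (map (nq \<sigma>) (Lp k v))) = Bv F k"
  unfolding Bv_def
  apply (rule sum.reindex_bij_witness[where j = "\<lambda>\<sigma>. map (\<lambda>i. \<sigma> (v,i)) [0..<fst F]"
        and i = "\<lambda>xs x. if x \<in> {v} \<times> {..<fst F} then xs ! snd x else undefined"])
  subgoal for \<sigma>
    by (auto simp: fun_eq_iff PiE_def extensional_def)
  subgoal for \<sigma>
    by simp
  subgoal for xs
    by (auto simp: list_eq_iff_nth_eq)
  subgoal for xs
    by (auto simp: PiE_def extensional_def)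
  subgoal for \<sigma>
  proof -
    have "prod_list (map (nq \<sigma>) (Lp k v)) = prod_list (map (\<lambda>i. neq2 ((map (\<lambda>i. \<sigma> (v,i)) [0..<fst F])!(2*i))
        ((map (\<lambda>i. \<sigma> (v,i)) [0..<fst F])!(2*i+1))) [0..<k])"
      unfolding Lp_def map_map by (intro arg_cong[where f=prod_list] map_cong refl) (simp add: nq_def ev)
    then show ?thesis by simp
  qed
  done

lemma slots_Suc: "slots (Suc m) (\<lambda>_. F) = slots m (\<lambda>_. F) \<union> ({m} \<times> {..<fst F})"
  by (auto simp: slots_def)

lemma nv_Cn_Suc:
  assumes ev: "fst F = 2*k"
  shows "network_value (Suc m) (\<lambda>_. F) (Cn k (Suc m)) = network_value m (\<lambda>_. F) (Cn k m) * Bv F k"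
proof -
  let ?A = "slots m (\<lambda>_. F)"
  let ?B = "{m} \<times> {..<fst F}"
  define f where "f \<tau> = Aw m (\<lambda>_. F) \<tau> * prod_list (map (nq \<tau>) (Cn k m))" for \<tau>
  define g where "g \<tau> = snd F (map (\<lambda>i. \<tau> (m,i)) [0..<fst F]) * prod_list (map (nq \<tau>) (Lp k m))" for \<tau>
  have disj: "?A \<inter> ?B = {}" by (auto simp: slots_def)
  have "network_value (Suc m) (\<lambda>_. F) (Cn k (Suc m))
      = (\<Sum>\<sigma>\<in>(?A \<union> ?B) \<rightarrow>\<^sub>E (UNIV::bool set). f (restrict \<sigma> ?A) * g (restrict \<sigma> ?B))"
    unfolding nv_eq slots_Suc
  proof (rule sum.cong[OF refl])
    fix \<sigma> :: "nat\<times>nat \<Rightarrow> bool"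
    have h0: "Aw (Suc m) (\<lambda>_. F) \<sigma> = (\<Prod>v<m. snd F (map (\<lambda>i. \<sigma> (v, i)) [0..<fst F])) * snd F (map (\<lambda>i. \<sigma> (m, i)) [0..<fst F])"
      unfolding Aw_def by simp
    have h1: "(\<Prod>v<m. snd F (map (\<lambda>i. \<sigma> (v, i)) [0..<fst F])) = Aw m (\<lambda>_. F) (restrict \<sigma> ?A)"
      unfolding Aw_def by (intro prod.cong refl arg_cong[where f="snd F"] map_cong) (auto simp: slots_def)
    have one_b: "map (\<lambda>i. \<sigma> (m, i)) [0..<fst F] = map (\<lambda>i. restrict \<sigma> ?B (m, i)) [0..<fst F]"
      by (intro map_cong refl) auto
    have h2: "prod_list (map (nq \<sigma>) (Cn k m)) = prod_list (map (nq (restrict \<sigma> ?A)) (Cn k m))"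
      by (intro arg_cong[where f=prod_list] map_cong refl) (auto simp: nq_def set_Cn slots_def ev)
    have h3: "prod_list (map (nq \<sigma>) (Lp k m)) = prod_list (map (nq (restrict \<sigma> ?B)) (Lp k m))"
      by (intro arg_cong[where f=prod_list] map_cong refl) (auto simp: nq_def Lp_def ev)
    have h4: "prod_list (map (nq \<sigma>) (Cn k (Suc m))) = prod_list (map (nq \<sigma>) (Cn k m)) * prod_list (map (nq \<sigma>) (Lp k m))"
      by (simp add: Cn_def)
    show "Aw (Suc m) (\<lambda>_. F) \<sigma> * prod_list (map (nq \<sigma>) (Cn k (Suc m))) = f (restrict \<sigma> ?A) * g (restrict \<sigma> ?B)"
      unfolding f_def g_def h0 h1 h4 h2 h3 one_b by (simp only: ac_simps)
  qed
  also have "\<dots> = (\<Sum>\<sigma>\<in>?A \<rightarrow>\<^sub>E (UNIV::bool set). f \<sigma>) * (\<Sum>\<sigma>\<in>?B \<rightarrow>\<^sub>E (UNIV::bool set). g \<sigma>)"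
    by (rule sum_PiE_Un[OF disj])
  also have "(\<Sum>\<sigma>\<in>?A \<rightarrow>\<^sub>E (UNIV::bool set). f \<sigma>) = network_value m (\<lambda>_. F) (Cn k m)"
    unfolding nv_eq f_def ..
  also have "(\<Sum>\<sigma>\<in>?B \<rightarrow>\<^sub>E (UNIV::bool set). g \<sigma>) = Bv F k"
    unfolding g_def by (rule vertex_sum[OF ev])
  finally show ?thesis .
qed

lemma nv_Cn0: "network_value 0 (\<lambda>_. F) (Cn k 0) = 1"
  by (simp add: nv_eq Cn_def Aw_def slots_def)

lemma nv_Cn: "fst F = 2*k \<Longrightarrow> network_value m (\<lambda>_. F) (Cn k m) = Bv F k ^ m"
  by (induction m) (simp_all add: nv_Cn0 nv_Cn_Suc)

theorem mainTheorem10: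
  fixes \<F> :: "signature set" and F :: signature
  assumes "premise_P \<F>"
    and "F \<in> \<F>"
    and "even (fst F)"
  shows "(\<forall>m lab W. 0 < m \<and> valid_gadget {F} m lab W [] \<longrightarrow> network_value m lab W = 0)
       \<or> (\<forall>m lab W. 0 < m \<and> valid_gadget {F} m lab W [] \<longrightarrow> network_value m lab W \<noteq> 0)"
proof -
  obtain k where ev: "fst F = 2*k" using assms(3) by (auto elim: evenE)
  let ?lab0 = "\<lambda>_::nat. F"
  have key: "network_value m lab W = 0 \<longleftrightarrow> Bv F k = 0"
    if m0: "0 < m" and V: "valid_gadget {F} m lab W []" for m lab W
  proof -
    have labv: "\<forall>v<m. lab v = F" using V unfolding valid_gadget_def by auto
    have sl: "slots m lab = slots m ?lab0" using labv by (auto simp: slots_def)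
    have V0: "valid_gadget {F} m ?lab0 W []" using V sl unfolding valid_gadget_def by simp
    have Aeq: "Aw m lab \<sigma> = Aw m ?lab0 \<sigma>" for \<sigma>
      unfolding Aw_def by (rule prod.cong) (simp_all add: labv)
    have "network_value m lab W = network_value m ?lab0 W" unfolding nv_eq sl Aeq ..
    then have "network_value m lab W = 0 \<longleftrightarrow> network_value m ?lab0 (Cn k m) = 0"
      using to_canon[OF assms(1,2) ev V0] by simp
    also have "\<dots> \<longleftrightarrow> Bv F k = 0" using nv_Cn[OF ev, of m] m0 by simp
    finally show ?thesis .
  qed
  show ?thesis
  proof (cases "Bv F k = 0")
    case True
    then show ?thesis using key by blast
  next
    case False
    then show ?thesis using key by blast
  qed
qed

end
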